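(* Let $(V,m)$ be a discrete measure space and $(b,c)$ a graph over $(V,m)$ satisfying (FC), i.e. $\widetilde L C_c(V)\subseteq\ell^2(V,m)$. Let $L$ be a non-negative selfadjoint operator on $\ell^2(V,m)$ with associated form $Q$. Then the following are equivalent: (i) $Q$ satisfies condition (C) with respect to $(b,c)$; (ii) $L$ is a restriction of $\widetilde L$.
   Context: $V$ is a finite or countably infinite set and $m:V\to(0,\infty)$; $(V,m)$ is a discrete measure space. $C(V)$ is the set of all functions $V\to\mathbb C$, $C_c(V)$ the finitely supported ones, and $\ell^2(V,m)$ carries $\langle u,v\rangle=\sum_x u(x)\overline{v(x)}m(x)$. A graph over $(V,m)$ is a pair $(b,c)$ with $c:V\to[0,\infty)$, $b:V\times V\to[0,\infty)$, $b(x,x)=0$, $b(x,y)=b(y,x)$, $\sum_y b(x,y)<\infty$. Let $\widetilde F=\{u\in C(V):\sum_y|b(x,y)u(y)|<\infty\ \forall x\}$ and $\widetilde L u(x)=\frac{1}{m(x)}\sum_y b(x,y)(u(x)-u(y))+\frac{c(x)}{m(x)}u(x)$ for $u\in\widetilde F$. "$L$ is a restriction of $\widetilde L$" means the domain of $L$ is contained in $\widetilde F$ and $Lu=\widetilde Lu$ there. The form associated to a non-negative selfadjoint $L$ is $Q(u,v)=\langle L^{1/2}u,L^{1/2}v\rangle$ on $D(Q)=D(L^{1/2})$. A symmetric form $Q$ on $\ell^2(V,m)$ with domain $D$ satisfies condition (C) w.r.t. $(b,c)$ if: (C0) $Q$ is non-negative and closed; (C1) $C_c(V)\subseteq D$;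 (C2) for all $u\in D$ and $v\in C_c(V)$ the sum $\sum_x u(x)\overline{\widetilde L v(x)}m(x)$ converges absolutely and equals $Q(u,v)$. *)

theory Defs
  imports "HOL-Analysis.Analysis" "HOL-Library.Function_Algebras"
begin

type_synonym 'v fn = "'v \<Rightarrow> complex"

definition l2 :: "('v \<Rightarrow> real) \<Rightarrow> 'v fn set" where
  "l2 m = {u. (\<lambda>x. (cmod (u x))^2 * m x) summable_on UNIV}"

definition ip :: "('v \<Rightarrow> real) \<Rightarrow> 'v fn \<Rightarrow> 'v fn \<Rightarrow> complex" where
  "ip m u v = (\<Sum>\<^sub>\<infinity>x. u x * cnj (v x) * complex_of_real (m x))"

definition l2norm :: "('v \<Rightarrow> real) \<Rightarrow> 'v fn \<Rightarrow> real" where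
  "l2norm m u = sqrt (\<Sum>\<^sub>\<infinity>x. (cmod (u x))^2 * m x)"

definition Cc :: "'v fn set" where
  "Cc = {u. finite {x. u x \<noteq> 0}}"

definition is_graph :: "('v \<Rightarrow> 'v \<Rightarrow> real) \<Rightarrow> ('v \<Rightarrow> real) \<Rightarrow> bool" where
  "is_graph b c \<longleftrightarrow> (\<forall>x. c x \<ge> 0) \<and> (\<forall>x y. b x y \<ge> 0) \<and> (\<forall>x. b x x = 0)
     \<and> (\<forall>x y. b x y = b y x) \<and> (\<forall>x. (\<lambda>y. b x y) summable_on UNIV)"

definition Ftilde :: "('v \<Rightarrow> 'v \<Rightarrow> real) \<Rightarrow> 'v fn set" where
  "Ftilde b = {u. \<forall>x. (\<lambda>y. norm (complex_of_real (b x y) * u y)) summable_on UNIV}"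

definition Ltilde :: "('v \<Rightarrow> real) \<Rightarrow> ('v \<Rightarrow> 'v \<Rightarrow> real) \<Rightarrow> ('v \<Rightarrow> real) \<Rightarrow> 'v fn \<Rightarrow> 'v fn" where
  "Ltilde m b c u = (\<lambda>x. complex_of_real (1 / m x) *
        (\<Sum>\<^sub>\<infinity>y. complex_of_real (b x y) * (u x - u y))
      + complex_of_real (c x / m x) * u x)"

definition FC :: "('v \<Rightarrow> real) \<Rightarrow> ('v \<Rightarrow> 'v \<Rightarrow> real) \<Rightarrow> ('v \<Rightarrow> real) \<Rightarrow> bool" where
  "FC m b c \<longleftrightarrow> (\<forall>v\<in>Cc. Ltilde m b c v \<in> l2 m)"

definition linear_op :: "('v \<Rightarrow> real) \<Rightarrow> 'v fn set \<Rightarrow> ('v fn \<Rightarrow> 'v fn) \<Rightarrow> bool" where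
  "linear_op m D A \<longleftrightarrow> D \<subseteq> l2 m \<and> 0 \<in> D \<and>
     (\<forall>u\<in>D. \<forall>v\<in>D. u + v \<in> D \<and> A (u + v) = A u + A v) \<and>
     (\<forall>u\<in>D. \<forall>a::complex. (\<lambda>x. a * u x) \<in> D \<and> A (\<lambda>x. a * u x) = (\<lambda>x. a * A u x)) \<and>
     (\<forall>u\<in>D. A u \<in> l2 m)"

definition densely_defined :: "('v \<Rightarrow> real) \<Rightarrow> 'v fn set \<Rightarrow> bool" where
  "densely_defined m D \<longleftrightarrow> (\<forall>u\<in>l2 m. \<forall>e>0. \<exists>v\<in>D. l2norm m (u - v) < e)"

text \<open>Selfadjoint: densely defined, symmetric, and the domain of the adjoint is contained in D
  (so that A = A^* ).\<close>
definition selfadjoint :: "('v \<Rightarrow> real) \<Rightarrow> 'v fn set \<Rightarrow> ('v fn \<Rightarrow> 'v fn) \<Rightarrow> bool" where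
  "selfadjoint m D A \<longleftrightarrow> linear_op m D A \<and> densely_defined m D \<and>
     (\<forall>u\<in>D. \<forall>v\<in>D. ip m (A u) v = ip m u (A v)) \<and>
     (\<forall>v\<in>l2 m. (\<exists>w\<in>l2 m. \<forall>u\<in>D. ip m (A u) v = ip m u w) \<longrightarrow> v \<in> D)"

definition nonneg_op :: "('v \<Rightarrow> real) \<Rightarrow> 'v fn set \<Rightarrow> ('v fn \<Rightarrow> 'v fn) \<Rightarrow> bool" where
  "nonneg_op m D A \<longleftrightarrow> (\<forall>u\<in>D. Im (ip m (A u) u) = 0 \<and> Re (ip m (A u) u) \<ge> 0)"

text \<open>(DS,S) is the square root L^(1/2) of (D,A): the (unique) non-negative selfadjoint
  operator with S o S = A (including domains).\<close>
definition is_sqrt_op :: "('v \<Rightarrow> real) \<Rightarrow> 'v fn set \<Rightarrow> ('v fn \<Rightarrow> 'v fn)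
     \<Rightarrow> 'v fn set \<Rightarrow> ('v fn \<Rightarrow> 'v fn) \<Rightarrow> bool" where
  "is_sqrt_op m D A DS S \<longleftrightarrow> selfadjoint m DS S \<and> nonneg_op m DS S \<and>
     D = {u\<in>DS. S u \<in> DS} \<and> (\<forall>u\<in>D. A u = S (S u))"

text \<open>The form associated with L, given its square root (DS,S): Q(u,v) = <S u, S v> on DS.\<close>
definition assoc_form :: "('v \<Rightarrow> real) \<Rightarrow> ('v fn \<Rightarrow> 'v fn) \<Rightarrow> 'v fn \<Rightarrow> 'v fn \<Rightarrow> complex" where
  "assoc_form m S u v = ip m (S u) (S v)"

text \<open>Closed form: the form domain is complete for the form norm.\<close>
definition closed_form :: "('v \<Rightarrow> real) \<Rightarrow> 'v fn set \<Rightarrow> ('v fn \<Rightarrow> 'v fn \<Rightarrow> complex) \<Rightarrow> bool" where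
  "closed_form m DQ q \<longleftrightarrow> (\<forall>f u. (\<forall>n. f n \<in> DQ) \<longrightarrow> u \<in> l2 m \<longrightarrow>
      (\<lambda>n. l2norm m (f n - u)) \<longlonglongrightarrow> 0 \<longrightarrow>
      (\<forall>e>0. \<exists>N. \<forall>n\<ge>N. \<forall>k\<ge>N. Re (q (f n - f k) (f n - f k)) < e) \<longrightarrow>
      u \<in> DQ \<and> (\<lambda>n. Re (q (f n - u) (f n - u))) \<longlonglongrightarrow> 0)"

definition condition_C :: "('v \<Rightarrow> real) \<Rightarrow> ('v \<Rightarrow> 'v \<Rightarrow> real) \<Rightarrow> ('v \<Rightarrow> real)
     \<Rightarrow> 'v fn set \<Rightarrow> ('v fn \<Rightarrow> 'v fn \<Rightarrow> complex) \<Rightarrow> bool" where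
  "condition_C m b c DQ q \<longleftrightarrow>
     \<comment> \<open>(C0)\<close> (\<forall>u\<in>DQ. Im (q u u) = 0 \<and> Re (q u u) \<ge> 0) \<and> closed_form m DQ q \<and>
     \<comment> \<open>(C1)\<close> Cc \<subseteq> DQ \<and>
     \<comment> \<open>(C2)\<close> (\<forall>u\<in>DQ. \<forall>v\<in>Cc.
        (\<lambda>x. norm (u x * cnj (Ltilde m b c v x) * complex_of_real (m x))) summable_on UNIV \<and>
        (\<Sum>\<^sub>\<infinity>x. u x * cnj (Ltilde m b c v x) * complex_of_real (m x)) = q u v)"

definition restriction_of_Ltilde :: "('v \<Rightarrow> real) \<Rightarrow> ('v \<Rightarrow> 'v \<Rightarrow> real) \<Rightarrow> ('v \<Rightarrow> real)
     \<Rightarrow> 'v fn set \<Rightarrow> ('v fn \<Rightarrow> 'v fn) \<Rightarrow> bool" where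
  "restriction_of_Ltilde m b c D A \<longleftrightarrow> D \<subseteq> Ftilde b \<and> (\<forall>u\<in>D. A u = Ltilde m b c u)"

end

theory Submission
  imports Defs
begin

definition nsq :: "('v \<Rightarrow> real) \<Rightarrow> 'v fn \<Rightarrow> real" where
  "nsq m u = (\<Sum>\<^sub>\<infinity>x. (cmod (u x))^2 * m x)"

lemma l2norm_nsq: "l2norm m u = sqrt (nsq m u)"
  by (simp add: l2norm_def nsq_def)

lemma nsq_nonneg: "\<forall>x. m x > 0 \<Longrightarrow> nsq m u \<ge> 0"
  unfolding nsq_def by (rule infsum_nonneg) (simp add: less_imp_le)

lemma l2_add:
  assumes mp: "\<forall>x. m x > 0" and u: "u \<in> l2 m" and v: "v \<in> l2 m"
  shows "u + v \<in> l2 m"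
proof -
  have s: "(\<lambda>x. 2 * ((cmod (u x))^2 * m x) + 2 * ((cmod (v x))^2 * m x)) summable_on UNIV"
    using u v unfolding l2_def
    by (intro summable_on_add summable_on_cmult_right) auto
  have le: "(cmod (u x + v x))^2 * m x \<le> 2 * ((cmod (u x))^2 * m x) + 2 * ((cmod (v x))^2 * m x)" for x
  proof -
    have "cmod (u x + v x) \<le> cmod (u x) + cmod (v x)" by (rule norm_triangle_ineq)
    hence "(cmod (u x + v x))^2 \<le> (cmod (u x) + cmod (v x))^2"
      by (intro power_mono) auto
    also have "\<dots> \<le> 2 * (cmod (u x))^2 + 2 * (cmod (v x))^2"
      by (smt (verit) sum_squares_bound power2_sum)
    finally show ?thesis using mp[rule_format, of x]
      by (smt (verit) mult_right_mono distrib_right mult.assoc)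
  qed
  have "(\<lambda>x. (cmod ((u + v) x))^2 * m x) summable_on UNIV"
    by (rule summable_on_comparison_test[OF s]) (use le mp in \<open>auto simp: less_imp_le\<close>)
  thus ?thesis unfolding l2_def by simp
qed

lemma l2_scale:
  assumes u: "u \<in> l2 m"
  shows "(\<lambda>x. a * u x) \<in> l2 m"
proof -
  have "(\<lambda>x. (cmod a)^2 * ((cmod (u x))^2 * m x)) summable_on UNIV"
    using u unfolding l2_def by (intro summable_on_cmult_right) auto
  thus ?thesis unfolding l2_def by (simp add: norm_mult power_mult_distrib mult.assoc)
qed

lemma l2_diff:
  assumes mp: "\<forall>x. m x > 0" and u: "u \<in> l2 m" and v: "v \<in> l2 m"
  shows "u - v \<in> l2 m"
proof -
  have "u - v = u + (\<lambda>x. (-1) * v x)" by (auto simp: fun_eq_iff)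
  show ?thesis by (subst \<open>u - v = _\<close>) (rule l2_add[OF mp u l2_scale[OF v]])
qed

lemma prod_bound:
  fixes a b m s :: real
  assumes "a \<ge> 0" "b \<ge> 0" "m \<ge> 0" "s > 0"
  shows "a * b * m \<le> (s * (a^2 * m) + (b^2 * m) / s) / 2"
proof -
  have "0 \<le> (s * a - b)^2 * m / (2 * s)" using assms by simp
  also have "(s * a - b)^2 * m / (2 * s) = (s * (a^2 * m) + (b^2 * m) / s) / 2 - a * b * m"
    using assms by (simp add: field_simps power2_eq_square)
  finally show ?thesis by simp
qed

lemma prod_abs_summable:
  assumes mp: "\<forall>x. m x > 0" and u: "u \<in> l2 m" and v: "v \<in> l2 m"
  shows "(\<lambda>x. norm (u x * cnj (v x) * complex_of_real (m x))) summable_on UNIV"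
proof -
  have s: "(\<lambda>x. (1/2) * ((cmod (u x))^2 * m x + (cmod (v x))^2 * m x)) summable_on UNIV"
    using u v unfolding l2_def
    by (intro summable_on_cmult_right summable_on_add) auto
  have le: "norm (u x * cnj (v x) * complex_of_real (m x)) \<le> (1/2) * ((cmod (u x))^2 * m x + (cmod (v x))^2 * m x)" for x
    using prod_bound[of "cmod (u x)" "cmod (v x)" "m x" 1] mp[rule_format, of x]
    by (simp add: norm_mult abs_of_pos)
  show ?thesis
    by (rule summable_on_comparison_test[OF s]) (use le in auto)
qed

lemma prod_summable:
  assumes mp: "\<forall>x. m x > 0" and u: "u \<in> l2 m" and v: "v \<in> l2 m"
  shows "(\<lambda>x. u x * cnj (v x) * complex_of_real (m x)) summable_on UNIV"
  by (rule abs_summable_summable) (rule prod_abs_summable[OF assms])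

lemma infsum_of_real_eq:
  fixes f :: "'a \<Rightarrow> real"
  assumes "f summable_on A"
  shows "infsum (\<lambda>x. complex_of_real (f x)) A = complex_of_real (infsum f A)"
  using assms by (intro infsumI) (simp add: has_sum_of_real_iff)

lemma infsum_diff:
  fixes f g :: "'a \<Rightarrow> 'b::{topological_ab_group_add, t2_space}"
  assumes "f summable_on A" "g summable_on A"
  shows "infsum (\<lambda>x. f x - g x) A = infsum f A - infsum g A"
proof -
  have "infsum (\<lambda>x. f x + - g x) A = infsum f A + infsum (\<lambda>x. - g x) A"
    using assms by (intro infsum_add) (auto simp: summable_on_uminus)
  thus ?thesis by (simp add: infsum_uminus)
qed

lemma summable_on_diff:
  fixes f g :: "'a \<Rightarrow> 'b::{topological_ab_group_add}"
  assumes "f summable_on A" "g summable_on A"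
  shows "(\<lambda>x. f x - g x) summable_on A"
proof -
  have "(\<lambda>x. f x + - g x) summable_on A"
    using assms by (intro summable_on_add) (auto simp: summable_on_uminus)
  thus ?thesis by simp
qed

lemma ip_self:
  assumes "u \<in> l2 m"
  shows "ip m u u = complex_of_real (nsq m u)"
proof -
  have "ip m u u = (\<Sum>\<^sub>\<infinity>x. complex_of_real ((cmod (u x))^2 * m x))"
    unfolding ip_def by (intro infsum_cong) (simp only: of_real_mult complex_norm_square)
  also have "\<dots> = complex_of_real (nsq m u)" unfolding nsq_def
    using assms unfolding l2_def by (intro infsum_of_real_eq) auto
  finally show ?thesis .
qed

lemma ip_diff_left:
  assumes mp: "\<forall>x. m x > 0" and u: "u \<in> l2 m" and v: "v \<in> l2 m" and w: "w \<in> l2 m"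
  shows "ip m (u - v) w = ip m u w - ip m v w"
proof -
  have "ip m (u - v) w = (\<Sum>\<^sub>\<infinity>x. u x * cnj (w x) * complex_of_real (m x) - v x * cnj (w x) * complex_of_real (m x))"
    unfolding ip_def by (intro infsum_cong) (simp add: algebra_simps)
  also have "\<dots> = ip m u w - ip m v w" unfolding ip_def
    by (intro infsum_diff prod_summable mp u v w)
  finally show ?thesis .
qed

lemma ip_diff_right:
  assumes mp: "\<forall>x. m x > 0" and u: "u \<in> l2 m" and v: "v \<in> l2 m" and w: "w \<in> l2 m"
  shows "ip m w (u - v) = ip m w u - ip m w v"
proof -
  have "ip m w (u - v) = (\<Sum>\<^sub>\<infinity>x. w x * cnj (u x) * complex_of_real (m x) - w x * cnj (v x) * complex_of_real (m x))"
    unfolding ip_def by (intro infsum_cong) (simp add: algebra_simps)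
  also have "\<dots> = ip m w u - ip m w v" unfolding ip_def
    by (intro infsum_diff prod_summable mp u v w)
  finally show ?thesis .
qed

lemma cs_real:
  fixes A B P :: real
  assumes A: "A \<ge> 0" and B: "B \<ge> 0" and h: "\<And>s. s > 0 \<Longrightarrow> P \<le> (s * A + B / s) / 2"
  shows "P \<le> sqrt A * sqrt B"
proof (cases "A > 0 \<and> B > 0")
  case True
  define s where "s = sqrt B / sqrt A"
  have sp: "s > 0" using True by (simp add: s_def)
  have "s * A = sqrt B * (A / sqrt A)" unfolding s_def by simp
  hence 1: "s * A = sqrt A * sqrt B" using A by (simp add: real_div_sqrt)
  have "B / s = sqrt A * (B / sqrt B)" unfolding s_def by simp
  hence 2: "B / s = sqrt A * sqrt B" using B by (simp add: real_div_sqrt)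
  show ?thesis using h[OF sp] 1 2 by simp
next
  case False
  show ?thesis
  proof (rule ccontr)
    assume "\<not> ?thesis"
    hence P: "P > 0" using A B by (smt (verit) real_sqrt_ge_zero mult_nonneg_nonneg)
    show False
    proof (cases "A = 0")
      case True
      define s where "s = (B + 1) / P"
      have sp: "s > 0" using P B by (simp add: s_def)
      have "B / s = B * P / (B + 1)" using P B by (simp add: s_def)
      also have "\<dots> < 2 * P" using P B by (simp add: field_simps) (smt (verit) mult_nonneg_nonneg)
      finally show False using h[OF sp] True by simp
    next
      case False
      hence B0: "B = 0" "A > 0" using \<open>\<not> (A > 0 \<and> B > 0)\<close> A B by auto
      define s where "s = P / (A + 1)"
      have sp: "s > 0" using P A by (simp add: s_def)
      have "s * A = P * A / (A + 1)" by (simp add: s_def)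
      also have "\<dots> < 2 * P" using P A by (simp add: field_simps) (smt (verit) mult_nonneg_nonneg)
      finally show False using h[OF sp] B0 by simp
    qed
  qed
qed

lemma cauchy_schwarz:
  assumes mp: "\<forall>x. m x > 0" and u: "u \<in> l2 m" and v: "v \<in> l2 m"
  shows "cmod (ip m u v) \<le> l2norm m u * l2norm m v"
proof -
  let ?P = "\<Sum>\<^sub>\<infinity>x. norm (u x * cnj (v x) * complex_of_real (m x))"
  have "cmod (ip m u v) \<le> ?P" unfolding ip_def
    by (rule norm_infsum_bound) (rule prod_abs_summable[OF mp u v])
  also have "?P \<le> sqrt (nsq m u) * sqrt (nsq m v)"
  proof (rule cs_real)
    show "nsq m u \<ge> 0" "nsq m v \<ge> 0" using nsq_nonneg[OF mp] by auto
    fix s :: real assume s: "s > 0"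
    have su: "(\<lambda>x. (cmod (u x))^2 * m x) summable_on UNIV" and sv: "(\<lambda>x. (cmod (v x))^2 * m x) summable_on UNIV"
      using u v unfolding l2_def by auto
    have "?P \<le> (\<Sum>\<^sub>\<infinity>x. (1/2) * (s * ((cmod (u x))^2 * m x) + ((cmod (v x))^2 * m x) / s))"
      apply (rule infsum_mono)
        apply (rule prod_abs_summable[OF mp u v])
       apply (intro summable_on_cmult_right summable_on_add summable_on_cmult_left)
      using su sv apply (auto simp: divide_inverse intro: summable_on_cmult_left)[2]
      using prod_bound[OF _ _ _ s] mp by (simp add: norm_mult abs_of_pos less_imp_le)
    also have "\<dots> = (s * nsq m u + nsq m v / s) / 2"
      unfolding nsq_def
      apply (subst infsum_cmult_right')
      apply (subst infsum_add)
      using su sv apply (auto simp: divide_inverse intro: summable_on_cmult_left summable_on_cmult_right)[2]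
      apply (subst infsum_cmult_right')
      apply (simp only: divide_inverse)
      apply (subst infsum_cmult_left')
      by simp
    finally show "?P \<le> (s * nsq m u + nsq m v / s) / 2" .
  qed
  finally show ?thesis by (simp add: l2norm_nsq)
qed

lemma nsq_zero:
  assumes mp: "\<forall>x. m x > 0" and u: "u \<in> l2 m" and z: "nsq m u \<le> 0"
  shows "u x = 0"
proof -
  have "(cmod (u x))^2 * m x = 0"
    using z u mp unfolding nsq_def l2_def
    by (intro nonneg_infsum_le_0D[where A=UNIV]) (auto simp: less_imp_le)
  thus ?thesis using mp[rule_format, of x] by auto
qed

lemma nsq_point:
  assumes mp: "\<forall>x. m x > 0" and h: "h \<in> l2 m"
  shows "(cmod (h x))^2 * m x \<le> nsq m h"
proof -
  have "sum (\<lambda>x. (cmod (h x))^2 * m x) {x} \<le> nsq m h" unfolding nsq_def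
    using h mp unfolding l2_def by (intro finite_sum_le_infsum) (auto simp: less_imp_le)
  thus ?thesis by simp
qed

lemma nsq_finite:
  assumes mp: "\<forall>x. m x > 0" and h: "h \<in> l2 m" and F: "finite F"
  shows "(\<Sum>x\<in>F. (cmod (h x))^2 * m x) \<le> nsq m h"
  unfolding nsq_def
  using h mp F unfolding l2_def by (intro finite_sum_le_infsum) (auto simp: less_imp_le)

lemma l2_complete:
  assumes mp: "\<forall>x. m x > 0" and g: "\<And>n. g n \<in> l2 m"
    and cau: "\<And>e. e > 0 \<Longrightarrow> \<exists>N. \<forall>n\<ge>N. \<forall>k\<ge>N. nsq m (g n - g k) < e"
  shows "\<exists>w\<in>l2 m. (\<lambda>n. nsq m (g n - w)) \<longlonglongrightarrow> 0"
proof -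
  have diffl2: "g n - g k \<in> l2 m" for n k by (rule l2_diff[OF mp g g])
  have C: "Cauchy (\<lambda>n. g n x)" for x
  proof (rule CauchyI)
    fix e :: real assume e: "e > 0"
    have mx: "m x > 0" using mp by auto
    obtain N where N: "\<forall>n\<ge>N. \<forall>k\<ge>N. nsq m (g n - g k) < e^2 * m x"
      using cau[of "e^2 * m x"] e mx by auto
    show "\<exists>M. \<forall>n\<ge>M. \<forall>k\<ge>M. norm (g n x - g k x) < e"
    proof (intro exI allI impI)
      fix n k assume "N \<le> n" "N \<le> k"
      hence "(cmod (g n x - g k x))^2 * m x < e^2 * m x"
        using nsq_point[OF mp diffl2, of n k x] N by force
      hence "(cmod (g n x - g k x))^2 < e^2" using mx by simp
      thus "norm (g n x - g k x) < e" using e by (simp add: power_less_imp_less_base)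
    qed
  qed
  define w where "w x = lim (\<lambda>n. g n x)" for x
  have conv: "(\<lambda>n. g n x) \<longlonglongrightarrow> w x" for x
    unfolding w_def using C[of x] by (simp add: Cauchy_convergent_iff convergent_LIMSEQ_iff)
  have key: "\<exists>N. \<forall>n\<ge>N. (g n - w) \<in> l2 m \<and> nsq m (g n - w) \<le> e" if e: "e > 0" for e
  proof -
    obtain N where N: "\<forall>n\<ge>N. \<forall>k\<ge>N. nsq m (g n - g k) < e" using cau[OF e] by auto
    have fin: "(\<Sum>x\<in>F. (cmod (g n x - w x))^2 * m x) \<le> e" if n: "n \<ge> N" and F: "finite F" for n F
    proof (rule LIMSEQ_le_const2)
      show "(\<lambda>k. \<Sum>x\<in>F. (cmod (g n x - g k x))^2 * m x) \<longlonglongrightarrow> (\<Sum>x\<in>F. (cmod (g n x - w x))^2 * m x)"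
        by (intro tendsto_intros conv)
      show "\<exists>N'. \<forall>k\<ge>N'. (\<Sum>x\<in>F. (cmod (g n x - g k x))^2 * m x) \<le> e"
      proof (intro exI allI impI)
        fix k assume k: "N \<le> k"
        have "(\<Sum>x\<in>F. (cmod (g n x - g k x))^2 * m x) \<le> nsq m (g n - g k)"
          using nsq_finite[OF mp diffl2 F, of n k] by simp
        also have "\<dots> < e" using N n k by auto
        finally show "(\<Sum>x\<in>F. (cmod (g n x - g k x))^2 * m x) \<le> e" by simp
      qed
    qed
    show ?thesis
    proof (intro exI allI impI conjI)
      fix n assume n: "N \<le> n"
      have s: "(\<lambda>x. (cmod ((g n - w) x))^2 * m x) summable_on UNIV"
      proof (rule nonneg_bdd_above_summable_on)
        show "\<And>x. x \<in> UNIV \<Longrightarrow> 0 \<le> (cmod ((g n - w) x))^2 * m x" using mp by (simp add: less_imp_le)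
        show "bdd_above (sum (\<lambda>x. (cmod ((g n - w) x))^2 * m x) ` {F. F \<subseteq> UNIV \<and> finite F})"
          using fin[OF n] by (intro bdd_aboveI2[where M=e]) auto
      qed
      thus "g n - w \<in> l2 m" unfolding l2_def by simp
      show "nsq m (g n - w) \<le> e" unfolding nsq_def
        using fin[OF n] by (intro infsum_le_finite_sums s) auto
    qed
  qed
  obtain N1 where N1: "\<forall>n\<ge>N1. (g n - w) \<in> l2 m" using key[of 1] by auto
  have "w = g N1 - (g N1 - w)" by simp
  hence wl2: "w \<in> l2 m" using l2_diff[OF mp g[of N1] N1[rule_format, of N1]] by simp
  have "(\<lambda>n. nsq m (g n - w)) \<longlonglongrightarrow> 0"
  proof (rule LIMSEQ_I)
    fix r :: real assume r: "r > 0"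
    obtain N where N: "\<forall>n\<ge>N. (g n - w) \<in> l2 m \<and> nsq m (g n - w) \<le> r/2" using key[of "r/2"] r by auto
    show "\<exists>no. \<forall>n\<ge>no. norm (nsq m (g n - w) - 0) < r"
      using N r nsq_nonneg[OF mp] by (intro exI[of _ N]) force
  qed
  thus ?thesis using wl2 by blast
qed

definition deg :: "('v \<Rightarrow> 'v \<Rightarrow> real) \<Rightarrow> 'v \<Rightarrow> real" where
  "deg b x = infsum (b x) UNIV"

definition Bsum :: "('v \<Rightarrow> 'v \<Rightarrow> real) \<Rightarrow> 'v fn \<Rightarrow> 'v \<Rightarrow> complex" where
  "Bsum b u x = (\<Sum>\<^sub>\<infinity>y. complex_of_real (b x y) * u y)"

lemma Ftilde_summable:
  assumes "u \<in> Ftilde b"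
  shows "(\<lambda>y. complex_of_real (b x y) * u y) summable_on UNIV"
proof -
  have "(\<lambda>y. norm (complex_of_real (b x y) * u y)) summable_on UNIV" using assms unfolding Ftilde_def by simp
  thus ?thesis by (rule abs_summable_summable)
qed

lemma Lt_formula:
  assumes mp: "\<forall>x. m x > 0" and gr: "is_graph b c" and u: "u \<in> Ftilde b"
  shows "Ltilde m b c u x = complex_of_real (1 / m x) * (complex_of_real (deg b x + c x) * u x - Bsum b u x)"
proof -
  have bs: "(\<lambda>y. b x y) summable_on UNIV" using gr unfolding is_graph_def by blast
  have s1: "(\<lambda>y. complex_of_real (b x y) * u x) summable_on UNIV"
    by (intro summable_on_cmult_left summable_on_of_real bs)
  have "(\<Sum>\<^sub>\<infinity>y. complex_of_real (b x y) * (u x - u y))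
      = (\<Sum>\<^sub>\<infinity>y. complex_of_real (b x y) * u x - complex_of_real (b x y) * u y)"
    by (simp add: algebra_simps)
  also have "\<dots> = (\<Sum>\<^sub>\<infinity>y. complex_of_real (b x y) * u x) - Bsum b u x"
    unfolding Bsum_def by (intro infsum_diff s1 Ftilde_summable u)
  also have "(\<Sum>\<^sub>\<infinity>y. complex_of_real (b x y) * u x) = complex_of_real (deg b x) * u x"
    unfolding deg_def using bs by (simp add: infsum_cmult_left' infsum_of_real_eq)
  finally have eq: "(\<Sum>\<^sub>\<infinity>y. complex_of_real (b x y) * (u x - u y)) = complex_of_real (deg b x) * u x - Bsum b u x" .
  have mx: "m x \<noteq> 0" using mp by (metis less_irrefl)
  show ?thesis unfolding Ltilde_def eq using mx
    by (simp add: field_simps)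
qed

lemma Cc_Ftilde: "v \<in> Cc \<Longrightarrow> v \<in> Ftilde b"
  unfolding Cc_def Ftilde_def
  by (auto intro!: finite_nonzero_values_imp_summable_on elim!: rev_finite_subset)

lemma Cc_l2: "v \<in> Cc \<Longrightarrow> v \<in> l2 m"
  unfolding Cc_def l2_def
  by (auto intro!: finite_nonzero_values_imp_summable_on elim!: rev_finite_subset)

lemma infsum_support:
  fixes f :: "'a \<Rightarrow> 'b::{comm_monoid_add, t2_space}"
  assumes "finite F" "\<And>x. x \<notin> F \<Longrightarrow> f x = 0"
  shows "infsum f UNIV = sum f F"
proof -
  have "infsum f UNIV = infsum f F" by (rule infsum_cong_neutral) (use assms in auto)
  thus ?thesis using assms by simp
qed

lemma Bsum_Cc:
  assumes v: "v \<in> Cc"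
  shows "Bsum b v y = (\<Sum>z\<in>{x. v x \<noteq> 0}. complex_of_real (b y z) * v z)"
  unfolding Bsum_def using v unfolding Cc_def by (intro infsum_support) auto

lemma has_sum_finite_sum:
  fixes f :: "'i \<Rightarrow> 'a \<Rightarrow> 'b::topological_comm_monoid_add"
  assumes "finite F" "\<And>z. z \<in> F \<Longrightarrow> (f z has_sum s z) A"
  shows "((\<lambda>y. \<Sum>z\<in>F. f z y) has_sum (\<Sum>z\<in>F. s z)) A"
  using assms by (induction F rule: finite_induct) (auto intro: has_sum_add)

lemma green:
  assumes mp: "\<forall>x. m x > 0" and gr: "is_graph b c" and u: "u \<in> Ftilde b" and v: "v \<in> Cc"
  shows "ip m (Ltilde m b c u) v = ip m u (Ltilde m b c v)"
proof -
  define F where "F = {x. v x \<noteq> 0}"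
  have F: "finite F" using v unfolding Cc_def F_def by auto
  have mx: "\<And>x. complex_of_real (m x) \<noteq> 0" using mp by (metis less_irrefl of_real_eq_0_iff)
  have bsym: "\<And>x y. b x y = b y x" using gr unfolding is_graph_def by auto
  have "ip m (Ltilde m b c u) v = (\<Sum>x\<in>F. Ltilde m b c u x * cnj (v x) * complex_of_real (m x))"
    unfolding ip_def by (rule infsum_support[OF F]) (simp add: F_def)
  also have "\<dots> = (\<Sum>x\<in>F. (complex_of_real (deg b x + c x) * u x - Bsum b u x) * cnj (v x))"
  proof (intro sum.cong refl)
    fix x
    have "Ltilde m b c u x * complex_of_real (m x) = complex_of_real (deg b x + c x) * u x - Bsum b u x"
      using mx[of x] by (simp add: Lt_formula[OF mp gr u])
    thus "Ltilde m b c u x * cnj (v x) * complex_of_real (m x) = (complex_of_real (deg b x + c x) * u x - Bsum b u x) * cnj (v x)"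
      by (simp add: mult.commute mult.left_commute)
  qed
  also have "\<dots> = (\<Sum>x\<in>F. u x * complex_of_real (deg b x + c x) * cnj (v x)) - (\<Sum>z\<in>F. cnj (v z) * Bsum b u z)"
    by (simp add: sum_subtractf algebra_simps)
  also have "\<dots> = ip m u (Ltilde m b c v)"
  proof -
    have h1: "((\<lambda>y. u y * complex_of_real (deg b y + c y) * cnj (v y)) has_sum
            (\<Sum>x\<in>F. u x * complex_of_real (deg b x + c x) * cnj (v x))) UNIV"
      by (rule has_sum_finite_neutralI) (use F in \<open>auto simp: F_def\<close>)
    have h2: "((\<lambda>y. \<Sum>z\<in>F. cnj (v z) * (complex_of_real (b z y) * u y)) has_sum (\<Sum>z\<in>F. cnj (v z) * Bsum b u z)) UNIV"
      unfolding Bsum_def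
      by (intro has_sum_finite_sum F has_sum_cmult_right) (simp add: Ftilde_summable[OF u])
    have "((\<lambda>y. u y * complex_of_real (deg b y + c y) * cnj (v y) - (\<Sum>z\<in>F. cnj (v z) * (complex_of_real (b z y) * u y)))
       has_sum ((\<Sum>x\<in>F. u x * complex_of_real (deg b x + c x) * cnj (v x)) - (\<Sum>z\<in>F. cnj (v z) * Bsum b u z))) UNIV"
    proof -
      have h3: "((\<lambda>y. - (\<Sum>z\<in>F. cnj (v z) * (complex_of_real (b z y) * u y))) has_sum - (\<Sum>z\<in>F. cnj (v z) * Bsum b u z)) UNIV"
        using h2 by (simp add: has_sum_uminus)
      show ?thesis using has_sum_add[OF h1 h3] by simp
    qed
    moreover have "u y * cnj (Ltilde m b c v y) * complex_of_real (m y) =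
        u y * complex_of_real (deg b y + c y) * cnj (v y) - (\<Sum>z\<in>F. cnj (v z) * (complex_of_real (b z y) * u y))" for y
    proof -
      have "Ltilde m b c v y * complex_of_real (m y) = complex_of_real (deg b y + c y) * v y - Bsum b v y"
        using mx[of y] by (simp add: Lt_formula[OF mp gr Cc_Ftilde[OF v]])
      hence A: "cnj (Ltilde m b c v y) * complex_of_real (m y) = complex_of_real (deg b y + c y) * cnj (v y) - cnj (Bsum b v y)"
        by (metis complex_cnj_complex_of_real complex_cnj_diff complex_cnj_mult)
      have B: "cnj (Bsum b v y) = (\<Sum>z\<in>F. complex_of_real (b z y) * cnj (v z))"
        unfolding Bsum_Cc[OF v] F_def[symmetric] by (simp add: bsym)
      have "u y * cnj (Ltilde m b c v y) * complex_of_real (m y) = u y * (cnj (Ltilde m b c v y) * complex_of_real (m y))"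
        by (simp add: mult.assoc)
      also have "\<dots> = u y * (complex_of_real (deg b y + c y) * cnj (v y) - (\<Sum>z\<in>F. complex_of_real (b z y) * cnj (v z)))"
        using A B by simp
      also have "\<dots> = u y * complex_of_real (deg b y + c y) * cnj (v y) - (\<Sum>z\<in>F. cnj (v z) * (complex_of_real (b z y) * u y))"
        by (simp add: right_diff_distrib sum_distrib_left mult_ac)
      finally show ?thesis .
    qed
    ultimately show ?thesis unfolding ip_def by (simp add: infsumI)
  qed
  finally show ?thesis .
qed

lemma lin_diff:
  assumes lin: "linear_op m D A" and u: "u \<in> D" and v: "v \<in> D"
  shows "u - v \<in> D \<and> A (u - v) = A u - A v"
proof -
  have eq: "u - v = u + (\<lambda>x. (-1) * v x)" by (auto simp: fun_eq_iff)
  have sv: "(\<lambda>x. (-1) * v x) \<in> D" "A (\<lambda>x. (-1) * v x) = (\<lambda>x. (-1) * A v x)"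
    using lin v unfolding linear_op_def by blast+
  have "u + (\<lambda>x. (-1) * v x) \<in> D" "A (u + (\<lambda>x. (-1) * v x)) = A u + A (\<lambda>x. (-1) * v x)"
    using lin u sv(1) unfolding linear_op_def by blast+
  thus ?thesis using sv(2) by (simp add: eq fun_eq_iff)
qed

lemma nsq_commute: "nsq m (a - b) = nsq m (b - a)"
  unfolding nsq_def by (simp add: norm_minus_commute)

lemma const_le_zero:
  fixes c :: real
  assumes "\<And>n. c \<le> t n" "t \<longlonglongrightarrow> 0"
  shows "c \<le> 0"
  using LIMSEQ_le[OF tendsto_const assms(2)] assms(1) by auto

lemma sa_closed:
  assumes mp: "\<forall>x. m x > 0" and sa: "selfadjoint m DS S"
  shows "closed_form m DS (assoc_form m S)"
  unfolding closed_form_def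
proof (intro allI impI)
  fix f u
  assume fD: "\<forall>n. f n \<in> DS" and ul2: "u \<in> l2 m" and lim: "(\<lambda>n. l2norm m (f n - u)) \<longlonglongrightarrow> 0"
    and cau: "\<forall>e>0. \<exists>N. \<forall>n\<ge>N. \<forall>k\<ge>N. Re (assoc_form m S (f n - f k) (f n - f k)) < e"
  have lin: "linear_op m DS S" and dense: "densely_defined m DS"
    and sym: "\<And>a b. a \<in> DS \<Longrightarrow> b \<in> DS \<Longrightarrow> ip m (S a) b = ip m a (S b)"
    and adj: "\<And>v. v \<in> l2 m \<Longrightarrow> (\<exists>w\<in>l2 m. \<forall>a\<in>DS. ip m (S a) v = ip m a w) \<Longrightarrow> v \<in> DS"
    using sa unfolding selfadjoint_def by blast+
  have DSl2: "\<And>a. a \<in> DS \<Longrightarrow> a \<in> l2 m" and Sl2: "\<And>a. a \<in> DS \<Longrightarrow> S a \<in> l2 m"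
    using lin unfolding linear_op_def by blast+
  define g where "g n = S (f n)" for n
  have gl2: "\<And>n. g n \<in> l2 m" unfolding g_def using Sl2 fD by auto
  have cauN: "\<exists>N. \<forall>n\<ge>N. \<forall>k\<ge>N. nsq m (g n - g k) < e" if e: "e > 0" for e
  proof -
    obtain N where N: "\<forall>n\<ge>N. \<forall>k\<ge>N. Re (assoc_form m S (f n - f k) (f n - f k)) < e" using cau e by blast
    have "Re (assoc_form m S (f n - f k) (f n - f k)) = nsq m (g n - g k)" for n k
    proof -
      have "S (f n - f k) = g n - g k" using lin_diff[OF lin fD[rule_format, of n] fD[rule_format, of k]] by (simp add: g_def)
      thus ?thesis unfolding assoc_form_def using ip_self[OF l2_diff[OF mp gl2 gl2]] by simp
    qed
    thus ?thesis using N by auto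
  qed
  obtain w where wl2: "w \<in> l2 m" and gw: "(\<lambda>n. nsq m (g n - w)) \<longlonglongrightarrow> 0"
    using l2_complete[where g=g and m=m, OF mp gl2 cauN] by blast
  have gw': "(\<lambda>n. l2norm m (g n - w)) \<longlonglongrightarrow> 0"
    unfolding l2norm_nsq using tendsto_real_sqrt[OF gw] by simp
  have lim': "(\<lambda>n. l2norm m (u - f n)) \<longlonglongrightarrow> 0"
    using lim by (simp add: l2norm_nsq nsq_commute)
  have wit: "ip m (S h) u = ip m h w" if h: "h \<in> DS" for h
  proof -
    have "cmod (ip m (S h) u - ip m h w) \<le> 0"
    proof (rule const_le_zero)
      show "(\<lambda>n. l2norm m (S h) * l2norm m (u - f n) + l2norm m h * l2norm m (g n - w)) \<longlonglongrightarrow> 0"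
        using tendsto_add[OF tendsto_mult[OF tendsto_const lim'] tendsto_mult[OF tendsto_const gw']] by simp
      fix n
      have fl2: "f n \<in> l2 m" using DSl2 fD by auto
      have "ip m (S h) u - ip m h w = ip m (S h) (u - f n) + ip m h (g n - w)"
        using ip_diff_right[OF mp ul2 fl2 Sl2[OF h]] ip_diff_right[OF mp gl2 wl2 DSl2[OF h]]
          sym[OF h fD[rule_format, of n]] by (simp add: g_def)
      also have "cmod \<dots> \<le> cmod (ip m (S h) (u - f n)) + cmod (ip m h (g n - w))" by (rule norm_triangle_ineq)
      also have "\<dots> \<le> l2norm m (S h) * l2norm m (u - f n) + l2norm m h * l2norm m (g n - w)"
        by (intro add_mono cauchy_schwarz mp Sl2 h DSl2 l2_diff ul2 fl2 gl2 wl2)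
      finally show "cmod (ip m (S h) u - ip m h w) \<le> l2norm m (S h) * l2norm m (u - f n) + l2norm m h * l2norm m (g n - w)" .
    qed
    thus ?thesis by simp
  qed
  have uDS: "u \<in> DS" using adj[OF ul2] wit wl2 by blast
  define z where "z = w - S u"
  have zl2: "z \<in> l2 m" unfolding z_def by (intro l2_diff mp wl2 Sl2 uDS)
  have orth: "ip m h z = 0" if h: "h \<in> DS" for h
    unfolding z_def using ip_diff_right[OF mp wl2 Sl2[OF uDS] DSl2[OF h]] wit[OF h] sym[OF h uDS] by simp
  have "nsq m z \<le> 0"
  proof (rule ccontr)
    assume "\<not> nsq m z \<le> 0"
    hence pos: "nsq m z > 0" by simp
    define r where "r = l2norm m z"
    have r: "r > 0" "r * r = nsq m z" using pos by (auto simp: r_def l2norm_nsq)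
    obtain h where h: "h \<in> DS" "l2norm m (z - h) < r / 2"
      using dense zl2 r(1) unfolding densely_defined_def by (meson half_gt_zero)
    have "ip m (z - h) z = ip m z z" using ip_diff_left[OF mp zl2 DSl2[OF h(1)] zl2] orth[OF h(1)] by simp
    hence "nsq m z = cmod (ip m (z - h) z)" using ip_self[OF zl2] nsq_nonneg[OF mp, of z] by simp
    also have "\<dots> \<le> l2norm m (z - h) * r" unfolding r_def
      by (intro cauchy_schwarz mp l2_diff zl2 DSl2 h(1))
    also have "\<dots> \<le> r / 2 * r" using h(2) r(1) by (intro mult_right_mono) auto
    finally have "nsq m z \<le> r / 2 * r" .
    moreover have "r / 2 * r = (r * r) / 2" by simp
    moreover have "r * r > 0" using r(1) by simp
    ultimately show False using r(2) by linarith
  qed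
  hence "\<And>x. z x = 0" using nsq_zero[OF mp zl2] by blast
  hence Su: "S u = w" unfolding z_def by (simp add: fun_eq_iff)
  have "Re (assoc_form m S (f n - u) (f n - u)) = nsq m (g n - w)" for n
  proof -
    have "S (f n - u) = g n - w" using lin_diff[OF lin fD[rule_format, of n] uDS] Su by (simp add: g_def)
    thus ?thesis unfolding assoc_form_def using ip_self[OF l2_diff[OF mp gl2 wl2]] by simp
  qed
  thus "u \<in> DS \<and> (\<lambda>n. Re (assoc_form m S (f n - u) (f n - u))) \<longlonglongrightarrow> 0" using uDS gw by simp
qed

lemma C_imp_restr:
  fixes m :: "'v \<Rightarrow> real"
  assumes mp: "\<forall>x. m x > 0" and gr: "is_graph b c" and sqrt: "is_sqrt_op m D L DS S"
    and C: "condition_C m b c DS (assoc_form m S)"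
  shows "restriction_of_Ltilde m b c D L"
proof -
  have saS: "selfadjoint m DS S" and Ddef: "D = {u\<in>DS. S u \<in> DS}" and LSS: "\<And>u. u \<in> D \<Longrightarrow> L u = S (S u)"
    using sqrt unfolding is_sqrt_op_def by blast+
  have sym: "\<And>a b. a \<in> DS \<Longrightarrow> b \<in> DS \<Longrightarrow> ip m (S a) b = ip m a (S b)"
    using saS unfolding selfadjoint_def by blast
  have CcDS: "Cc \<subseteq> DS"
    and C2: "\<And>u v. u \<in> DS \<Longrightarrow> v \<in> Cc \<Longrightarrow>
        (\<lambda>x. norm (u x * cnj (Ltilde m b c v x) * complex_of_real (m x))) summable_on UNIV \<and>
        (\<Sum>\<^sub>\<infinity>x. u x * cnj (Ltilde m b c v x) * complex_of_real (m x)) = assoc_form m S u v"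
    using C unfolding condition_C_def by blast+
  have bsym: "\<And>x y. b x y = b y x" and bxx: "\<And>x. b x x = 0" using gr unfolding is_graph_def by blast+
  have mx: "\<And>x. complex_of_real (m x) \<noteq> 0" using mp by (metis less_irrefl of_real_eq_0_iff)
  have main: "u \<in> Ftilde b \<and> L u = Ltilde m b c u" if u: "u \<in> D" for u
  proof -
    have uDS: "u \<in> DS" and SuDS: "S u \<in> DS" using u Ddef by auto
    define dl :: "'v \<Rightarrow> 'v \<Rightarrow> complex" where "dl x = (\<lambda>y. if y = x then 1 else (0::complex))" for x
    have dsupp: "{y. dl x y \<noteq> 0} = {x}" for x by (auto simp: dl_def)
    have dCc: "dl x \<in> Cc" for x using dsupp[of x] unfolding Cc_def by simp
    have Bd: "Bsum b (dl x) y = complex_of_real (b y x)" for x y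
    proof -
      have "Bsum b (dl x) y = (\<Sum>z\<in>{x}. complex_of_real (b y z) * dl x z)"
        unfolding Bsum_def by (rule infsum_support) (auto simp: dl_def)
      thus ?thesis by (simp add: dl_def)
    qed
    have tm: "u y * cnj (Ltilde m b c (dl x) y) * complex_of_real (m y) =
        (if y = x then u x * complex_of_real (deg b x + c x) else 0) - complex_of_real (b x y) * u y" for x y
    proof -
      have eq: "Ltilde m b c (dl x) y * complex_of_real (m y) = complex_of_real (deg b y + c y) * dl x y - complex_of_real (b y x)"
        using mx[of y] by (simp add: Lt_formula[OF mp gr Cc_Ftilde[OF dCc]] Bd)
      have "cnj (Ltilde m b c (dl x) y * complex_of_real (m y)) = cnj (complex_of_real (deg b y + c y) * dl x y - complex_of_real (b y x))"
        by (simp only: eq)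
      hence eq2: "cnj (Ltilde m b c (dl x) y) * complex_of_real (m y) = complex_of_real (deg b y + c y) * dl x y - complex_of_real (b y x)"
        by (simp add: dl_def)
      have "u y * cnj (Ltilde m b c (dl x) y) * complex_of_real (m y) = u y * (cnj (Ltilde m b c (dl x) y) * complex_of_real (m y))"
        by (simp add: mult.assoc)
      also have "\<dots> = u y * (complex_of_real (deg b y + c y) * dl x y - complex_of_real (b y x))" by (simp only: eq2)
      finally show ?thesis by (cases "y = x") (auto simp: dl_def bxx bsym algebra_simps)
    qed
    have summ: "(\<lambda>y. norm (u y * cnj (Ltilde m b c (dl x) y) * complex_of_real (m y))) summable_on UNIV"
      and val: "(\<Sum>\<^sub>\<infinity>y. u y * cnj (Ltilde m b c (dl x) y) * complex_of_real (m y)) = assoc_form m S u (dl x)" for x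
      using C2[OF uDS dCc] by blast+
    have Ft: "(\<lambda>y. norm (complex_of_real (b x y) * u y)) summable_on UNIV" for x
    proof (rule summable_on_comparison_test[OF summ])
      fix y
      show "norm (complex_of_real (b x y) * u y) \<le> norm (u y * cnj (Ltilde m b c (dl x) y) * complex_of_real (m y))"
        unfolding tm by (cases "y = x") (auto simp: bxx)
    qed simp
    have uFt: "u \<in> Ftilde b" unfolding Ftilde_def using Ft by blast
    have "L u x = Ltilde m b c u x" for x
    proof -
      have "assoc_form m S u (dl x) = ip m (L u) (dl x)"
        unfolding assoc_form_def using sym[OF SuDS CcDS[THEN subsetD, OF dCc]] LSS[OF u] by simp
      also have "\<dots> = (\<Sum>y\<in>{x}. L u y * cnj (dl x y) * complex_of_real (m y))"
        unfolding ip_def by (rule infsum_support) (auto simp: dl_def)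
      also have "\<dots> = L u x * complex_of_real (m x)" by (simp add: dl_def)
      finally have 1: "assoc_form m S u (dl x) = L u x * complex_of_real (m x)" .
      have "(\<Sum>\<^sub>\<infinity>y. u y * cnj (Ltilde m b c (dl x) y) * complex_of_real (m y))
          = (\<Sum>\<^sub>\<infinity>y. (if y = x then u x * complex_of_real (deg b x + c x) else 0) - complex_of_real (b x y) * u y)"
        by (simp only: tm)
      also have "\<dots> = (\<Sum>\<^sub>\<infinity>y. (if y = x then u x * complex_of_real (deg b x + c x) else 0)) - Bsum b u x"
        unfolding Bsum_def
        by (intro infsum_diff Ftilde_summable[OF uFt] finite_nonzero_values_imp_summable_on) (auto intro: rev_finite_subset[of "{x}"])
      also have "(\<Sum>\<^sub>\<infinity>y. (if y = x then u x * complex_of_real (deg b x + c x) else 0)) = u x * complex_of_real (deg b x + c x)"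
        by (subst infsum_support[where F="{x}"]) auto
      also have "u x * complex_of_real (deg b x + c x) - Bsum b u x = Ltilde m b c u x * complex_of_real (m x)"
        using mx[of x] by (simp add: Lt_formula[OF mp gr uFt] mult.commute)
      finally have 2: "L u x * complex_of_real (m x) = Ltilde m b c u x * complex_of_real (m x)"
        using val 1 by simp
      thus ?thesis using mx[of x] by simp
    qed
    thus ?thesis using uFt by auto
  qed
  show ?thesis unfolding restriction_of_Ltilde_def using main by blast
qed

lemma restr_imp_C:
  fixes m :: "'v \<Rightarrow> real"
  assumes mp: "\<forall>x. m x > 0" and gr: "is_graph b c" and fc: "FC m b c"
    and sa: "selfadjoint m D L" and sqrt: "is_sqrt_op m D L DS S"
    and R: "restriction_of_Ltilde m b c D L"
  shows "condition_C m b c DS (assoc_form m S)"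
proof -
  have saS: "selfadjoint m DS S" and Ddef: "D = {u\<in>DS. S u \<in> DS}" and LSS: "\<And>u. u \<in> D \<Longrightarrow> L u = S (S u)"
    using sqrt unfolding is_sqrt_op_def by blast+
  have sym: "\<And>a b. a \<in> DS \<Longrightarrow> b \<in> DS \<Longrightarrow> ip m (S a) b = ip m a (S b)"
    using saS unfolding selfadjoint_def by blast
  have lin: "linear_op m DS S" using saS unfolding selfadjoint_def by blast
  have DSl2: "\<And>a. a \<in> DS \<Longrightarrow> a \<in> l2 m" and Sl2: "\<And>a. a \<in> DS \<Longrightarrow> S a \<in> l2 m"
    using lin unfolding linear_op_def by blast+
  have adjL: "\<And>v. v \<in> l2 m \<Longrightarrow> (\<exists>w\<in>l2 m. \<forall>a\<in>D. ip m (L a) v = ip m a w) \<Longrightarrow> v \<in> D"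
    using sa unfolding selfadjoint_def by blast
  have DFt: "\<And>u. u \<in> D \<Longrightarrow> u \<in> Ftilde b" and LLt: "\<And>u. u \<in> D \<Longrightarrow> L u = Ltilde m b c u"
    using R unfolding restriction_of_Ltilde_def by blast+
  have fcv: "\<And>v. v \<in> Cc \<Longrightarrow> Ltilde m b c v \<in> l2 m" using fc unfolding FC_def by blast
  have CcD: "v \<in> D" if v: "v \<in> Cc" for v
  proof (rule adjL[OF Cc_l2[OF v]])
    show "\<exists>w\<in>l2 m. \<forall>a\<in>D. ip m (L a) v = ip m a w"
    proof (intro bexI ballI)
      fix a assume a: "a \<in> D"
      show "ip m (L a) v = ip m a (Ltilde m b c v)"
        using LLt[OF a] green[OF mp gr DFt[OF a] v] by simp
    qed (rule fcv[OF v])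
  qed
  have DDS: "D \<subseteq> DS" using Ddef by auto
  show ?thesis unfolding condition_C_def
  proof (intro conjI ballI)
    fix u assume u: "u \<in> DS"
    have "assoc_form m S u u = complex_of_real (nsq m (S u))"
      unfolding assoc_form_def by (rule ip_self[OF Sl2[OF u]])
    thus "Im (assoc_form m S u u) = 0" "0 \<le> Re (assoc_form m S u u)"
      using nsq_nonneg[OF mp] by auto
  next
    show "closed_form m DS (assoc_form m S)" by (rule sa_closed[OF mp saS])
  next
    show "Cc \<subseteq> DS" using CcD DDS by blast
  next
    fix u and v :: "'v fn" assume u: "u \<in> DS" and v: "v \<in> Cc"
    show "(\<lambda>x. norm (u x * cnj (Ltilde m b c v x) * complex_of_real (m x))) summable_on UNIV"
      by (rule prod_abs_summable[OF mp DSl2[OF u] fcv[OF v]])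
    have vD: "v \<in> D" by (rule CcD[OF v])
    have SvDS: "S v \<in> DS" using vD Ddef by auto
    have "(\<Sum>\<^sub>\<infinity>x. u x * cnj (Ltilde m b c v x) * complex_of_real (m x)) = ip m u (Ltilde m b c v)"
      by (simp add: ip_def)
    also have "\<dots> = ip m u (S (S v))" using LLt[OF vD] LSS[OF vD] by simp
    also have "\<dots> = assoc_form m S u v" unfolding assoc_form_def using sym[OF u SvDS] by simp
    finally show "(\<Sum>\<^sub>\<infinity>x. u x * cnj (Ltilde m b c v x) * complex_of_real (m x)) = assoc_form m S u v" .
  qed
qed

theorem mainTheorem5:
  fixes m :: "'v::countable \<Rightarrow> real" and b :: "'v \<Rightarrow> 'v \<Rightarrow> real" and c :: "'v \<Rightarrow> real"
    and D :: "('v \<Rightarrow> complex) set" and L :: "('v \<Rightarrow> complex) \<Rightarrow> ('v \<Rightarrow> complex)"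
    and DS :: "('v \<Rightarrow> complex) set" and S :: "('v \<Rightarrow> complex) \<Rightarrow> ('v \<Rightarrow> complex)"
  assumes m_pos: "\<forall>x. m x > 0"
    and graph: "is_graph b c"
    and fc: "FC m b c"
    and sa: "selfadjoint m D L"
    and nonneg: "nonneg_op m D L"
    and sqrt: "is_sqrt_op m D L DS S"
  shows "condition_C m b c DS (assoc_form m S) \<longleftrightarrow> restriction_of_Ltilde m b c D L"
  using C_imp_restr[OF m_pos graph sqrt] restr_imp_C[OF m_pos graph fc sa sqrt] by blast

end
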